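(* Let $(X,d)$ be a metric space, $\mu$ a Borel probability measure on $X$ with no atoms, and $T:X\to X$ a measurable map preserving $\mu$. (i) Suppose that every decreasing sequence of balls $B(y,r_1)\supseteq B(y,r_2)\supseteq\cdots$ in $X$ with a common center $y$ and with $\sum_n\mu(B(y,r_n))=\infty$ satisfies $\mu(\limsup_n T^{-n}B(y,r_n))=1$. Then for every $y\in X$, $$\liminf_{r\to 0}\frac{\log\tau_{B(y,r)}(x)}{-\log\mu(B(y,r))}=1\quad\text{for }\mu\text{-a.e. }x.$$ (ii) Let $B(y,r)=\{x: d(x,y)\le r\}$ denote the closed ball. Suppose that every decreasing sequence of closed balls $A_n=B(y,r_n)$ with a common center $y$ and with $\sum_n\mu(A_n)=\infty$ is strongly Borel–Cantelli. Then for every $y\in X$, $$\lim_{r\to 0}\frac{\log\tau_{B(y,r)}(x)}{-\log\mu(B(y,r))}=1\quad\text{for }\mu\text{-a.e. }x.$$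
   Context: $\tau_A(x)=\min\{n\in\mathbf N: T^n(x)\in A\}$ (with $\tau_A(x)=\infty$ if no such $n$). $\limsup_n S_n$ denotes the set of points belonging to infinitely many $S_n$. A sequence of sets $A_n\subseteq X$ is strongly Borel–Cantelli (SBC) if for $\mu$-a.e. $x$, $\frac{\sum_{n=1}^N 1_{T^{-n}A_n}(x)}{\sum_{n=1}^N\mu(A_n)}\to 1$ as $N\to\infty$, where $1_A$ is the indicator function of $A$. *)

theory Defs
  imports "HOL-Probability.Probability"
begin

definition hit_time :: "('a \<Rightarrow> 'a) \<Rightarrow> 'a set \<Rightarrow> 'a \<Rightarrow> enat" where
  "hit_time T A x =
     (if \<exists>n\<ge>1. (T ^^ n) x \<in> A then enat (LEAST n. n \<ge> 1 \<and> (T ^^ n) x \<in> A) else \<infinity>)"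

definition hit_ratio :: "'a measure \<Rightarrow> ('a \<Rightarrow> 'a) \<Rightarrow> 'a set \<Rightarrow> 'a \<Rightarrow> ereal" where
  "hit_ratio M T A x =
     (case hit_time T A x of
        enat n \<Rightarrow> ereal (ln (real n) / - ln (measure M A))
      | \<infinity> \<Rightarrow> \<infinity>)"

definition strongly_BC :: "'a measure \<Rightarrow> ('a \<Rightarrow> 'a) \<Rightarrow> (nat \<Rightarrow> 'a set) \<Rightarrow> bool" where
  "strongly_BC M T A \<longleftrightarrow>
     (AE x in M. ((\<lambda>N. (\<Sum>n\<in>{1..N}. indicator ((T ^^ n) -` A n) x :: real)
                      / (\<Sum>n\<in>{1..N}. measure M (A n))) \<longlonglongrightarrow> 1))"

end

theory Submission imports Defs "HOL-Library.Discrete_Functions" begin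


locale mpres = prob_space M for M :: "'a measure" +
  fixes T :: "'a \<Rightarrow> 'a"
  assumes spU: "space M = UNIV" and Tm: "T \<in> M \<rightarrow>\<^sub>M M" and Tp: "distr M M T = M"
begin

lemma funpow_meas: "(T ^^ n) \<in> M \<rightarrow>\<^sub>M M"
proof (induction n)
  case 0 then show ?case by simp
next
  case (Suc n)
  have "T ^^ Suc n = T \<circ> (T ^^ n)" by simp
  then show ?case using Suc Tm by (metis measurable_comp)
qed

lemma pre_sets: "A \<in> sets M \<Longrightarrow> (T ^^ n) -` A \<in> sets M"
  using measurable_sets[OF funpow_meas, of A n] spU by simp

lemma pre_T_measure: "A \<in> sets M \<Longrightarrow> measure M (T -` A) = measure M A"
proof -
  assume A: "A \<in> sets M"
  have "measure M A = measure (distr M M T) A" using Tp by simp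
  also have "\<dots> = measure M (T -` A \<inter> space M)" using A Tm by (simp add: measure_distr)
  finally show ?thesis using spU by simp
qed

lemma pre_measure: "A \<in> sets M \<Longrightarrow> measure M ((T ^^ n) -` A) = measure M A"
proof (induction n arbitrary: A)
  case 0 then show ?case by simp
next
  case (Suc n)
  have e: "(T ^^ Suc n) -` A = T -` ((T ^^ n) -` A)" by (simp only: funpow_Suc_right vimage_comp)
  show ?case unfolding e using Suc pre_T_measure pre_sets by simp
qed

end

lemma hit_le: "hit_time T A x \<le> enat K \<longleftrightarrow> (\<exists>n. 1 \<le> n \<and> n \<le> K \<and> (T ^^ n) x \<in> A)"
proof
  assume h: "hit_time T A x \<le> enat K"
  then have ex: "\<exists>n\<ge>1. (T ^^ n) x \<in> A" unfolding hit_time_def by (auto split: if_splits)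
  then have "hit_time T A x = enat (LEAST n. n \<ge> 1 \<and> (T ^^ n) x \<in> A)" unfolding hit_time_def by simp
  with h have le: "(LEAST n. n \<ge> 1 \<and> (T ^^ n) x \<in> A) \<le> K" by simp
  from ex have "(LEAST n. n \<ge> 1 \<and> (T ^^ n) x \<in> A) \<ge> 1 \<and> (T ^^ (LEAST n. n \<ge> 1 \<and> (T ^^ n) x \<in> A)) x \<in> A"
    by (metis (mono_tags, lifting) LeastI)
  with le show "\<exists>n. 1 \<le> n \<and> n \<le> K \<and> (T ^^ n) x \<in> A" by blast
next
  assume "\<exists>n. 1 \<le> n \<and> n \<le> K \<and> (T ^^ n) x \<in> A"
  then obtain n where n: "1 \<le> n" "n \<le> K" "(T ^^ n) x \<in> A" by blast
  then have ex: "\<exists>n\<ge>1. (T ^^ n) x \<in> A" by blast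
  have "(LEAST n. n \<ge> 1 \<and> (T ^^ n) x \<in> A) \<le> n" using n by (intro Least_le) simp
  then show "hit_time T A x \<le> enat K" using ex n unfolding hit_time_def by simp
qed

lemma hit_mono: "A \<subseteq> A' \<Longrightarrow> hit_time T A' x \<le> hit_time T A x"
proof (cases "hit_time T A x")
  case (enat K)
  assume "A \<subseteq> A'"
  have "\<exists>n. 1 \<le> n \<and> n \<le> K \<and> (T ^^ n) x \<in> A" using hit_le[of T A x K] enat by simp
  then have "\<exists>n. 1 \<le> n \<and> n \<le> K \<and> (T ^^ n) x \<in> A'" using \<open>A \<subseteq> A'\<close> by blast
  then have "hit_time T A' x \<le> enat K" using hit_le[of T A' x K] by simp
  then show ?thesis using enat by simp
qed simp

lemma hit_ge1: "hit_time T A x = enat m \<Longrightarrow> 1 \<le> m"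
  using hit_le[of T A x m] by auto

lemma ratio_enat: "hit_time T A x = enat m \<Longrightarrow> hit_ratio M T A x = ereal (ln (real m) / - ln (measure M A))"
  unfolding hit_ratio_def by simp

lemma ratio_inf: "hit_time T A x = \<infinity> \<Longrightarrow> hit_ratio M T A x = \<infinity>"
  unfolding hit_ratio_def by simp

context mpres begin

lemma hit_set: "{x. hit_time T A x \<le> enat K} = (\<Union>n\<in>{1..K}. (T ^^ n) -` A)"
  by (auto simp: hit_le)

lemma hit_set_measure:
  assumes "A \<in> sets M"
  shows "{x. hit_time T A x \<le> enat K} \<in> sets M \<and> measure M {x. hit_time T A x \<le> enat K} \<le> real K * measure M A"
proof -
  have s: "(\<Union>n\<in>{1..K}. (T ^^ n) -` A) \<in> sets M" using pre_sets assms by auto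
  have "measure M (\<Union>n\<in>{1..K}. (T ^^ n) -` A) \<le> (\<Sum>n\<in>{1..K}. measure M ((T ^^ n) -` A))"
    by (rule finite_measure_subadditive_finite) (use pre_sets assms in blast)+
  also have "\<dots> = real K * measure M A" using pre_measure[OF assms] by simp
  finally show ?thesis using s unfolding hit_set by blast
qed

end


lemma level_union:
  fixes B :: "real \<Rightarrow> 'a set" and t :: real
  assumes fm: "finite_measure M" and Bm: "\<And>r. B r \<in> sets M"
    and mono: "\<And>r s. r \<le> s \<Longrightarrow> B r \<subseteq> B s" and t: "0 \<le> t"
  shows "(\<Union>{B r | r. measure M (B r) \<le> t}) \<in> sets M \<and> measure M (\<Union>{B r | r. measure M (B r) \<le> t}) \<le> t"
proof -
  interpret finite_measure M by fact
  define P where "P = {r. measure M (B r) \<le> t}"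
  have down: "s \<in> P" if "r \<in> P" "s \<le> r" for r s
    using that mono[of s r] Bm finite_measure_mono[of "B s" "B r"] unfolding P_def by force
  have U: "\<Union>{B r | r. measure M (B r) \<le> t} = (\<Union>r\<in>P. B r)" unfolding P_def by auto
  have claim: "P = {} \<or> (\<exists>s::nat\<Rightarrow>real. incseq s \<and> (\<forall>n. s n \<in> P) \<and> (\<forall>r\<in>P. \<exists>n. r \<le> s n))"
  proof (cases "P = {}")
    case False
    show ?thesis
    proof (cases "bdd_above P")
      case nb: False
      have "real n \<in> P" for n
      proof -
        from nb obtain r where "r \<in> P" "real n < r" unfolding bdd_above_def by (meson not_le)
        then show ?thesis using down by auto
      qed
      moreover have "incseq (\<lambda>n. real n)" by (simp add: incseq_def)
      moreover have "\<forall>r\<in>P. \<exists>n. r \<le> real n" by (meson real_nat_ceiling_ge)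
      ultimately show ?thesis by blast
    next
      case bd: True
      define u where "u = Sup P"
      show ?thesis
      proof (cases "u \<in> P")
        case True
        have "\<forall>r\<in>P. r \<le> u" using bd u_def by (simp add: cSup_upper)
        then show ?thesis using True by (intro disjI2 exI[of _ "\<lambda>_. u"]) (auto simp: incseq_def)
      next
        case nu: False
        define s where "s n = u - 1 / (real n + 1)" for n
        have "s n \<in> P" for n
        proof -
          have "s n < Sup P" unfolding s_def u_def by simp
          then obtain r where "r \<in> P" "s n < r" using less_cSup_iff[OF False bd] by blast
          then show ?thesis using down by auto
        qed
        moreover have "incseq s" unfolding incseq_def s_def
          by (auto intro!: divide_left_mono simp: field_simps)
        moreover have "\<exists>n. r \<le> s n" if "r \<in> P" for r
        proof -
          have "r \<le> u" using that bd u_def by (simp add: cSup_upper)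
          with nu that have "r < u" by (metis order_le_less)
          then obtain n where "inverse (real (Suc n)) < u - r" using reals_Archimedean by (metis diff_gt_0_iff_gt)
          then have "1 / (real n + 1) < u - r" by (simp add: inverse_eq_divide add.commute)
          then show ?thesis unfolding s_def by (intro exI[of _ n]) linarith
        qed
        ultimately show ?thesis by blast
      qed
    qed
  qed simp
  show ?thesis
  proof (cases "P = {}")
    case True then have e: "\<Union>{B r | r. measure M (B r) \<le> t} = {}" unfolding U by simp
    show ?thesis unfolding e using t by simp
  next
    case False
    with claim obtain s where s: "incseq s" "\<And>n. s n \<in> P" "\<And>r. r \<in> P \<Longrightarrow> \<exists>n. r \<le> s n" by blast
    have U2: "(\<Union>r\<in>P. B r) = (\<Union>n. B (s n))"
    proof
      show "(\<Union>r\<in>P. B r) \<subseteq> (\<Union>n. B (s n))"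
      proof (rule subsetI)
        fix x assume "x \<in> (\<Union>r\<in>P. B r)"
        then obtain r where r: "r \<in> P" "x \<in> B r" by blast
        obtain n where "r \<le> s n" using s(3)[OF r(1)] by blast
        then have "x \<in> B (s n)" using mono r(2) by blast
        then show "x \<in> (\<Union>n. B (s n))" by blast
      qed
      show "(\<Union>n. B (s n)) \<subseteq> (\<Union>r\<in>P. B r)" using s(2) by blast
    qed
    have inc: "incseq (\<lambda>n. B (s n))" using s(1) mono by (simp add: incseq_def)
    have lim: "(\<lambda>n. measure M (B (s n))) \<longlonglongrightarrow> measure M (\<Union>n. B (s n))"
      by (rule finite_Lim_measure_incseq) (use Bm inc in auto)
    have "measure M (\<Union>n. B (s n)) \<le> t"
      by (rule LIMSEQ_le_const2[OF lim]) (use s(2) P_def in auto)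
    moreover have "(\<Union>n. B (s n)) \<in> sets M" using Bm by auto
    ultimately show ?thesis using U U2 by simp
  qed
qed

lemma lvl_lower:
  fixes c :: real and p K :: nat
  assumes "0 < c" "0 < p" "c \<le> 1 / 2^(p*K)"
  shows "\<exists>k\<ge>K. c \<le> 1 / 2^(p*k) \<and> 1 / 2^(p*(k+1)) < c"
proof -
  obtain n where n: "1 / c < 2 ^ n" using real_arch_pow[of 2 "1/c"] by auto
  have "(2::real) ^ n \<le> 2 ^ (p*n)" using assms(2) by (intro power_increasing) auto
  with n have h: "1 / c < 2^(p*n)" by linarith
  have "1 / 2^(p*n) < c" using h assms(1) by (simp add: field_simps)
  then have ex: "\<exists>k. 1 / 2^(p*k) < c" by blast
  define k0 where "k0 = (LEAST k. 1 / (2::real)^(p*k) < c)"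
  have k0: "1 / 2^(p*k0) < c" unfolding k0_def by (rule LeastI_ex[OF ex])
  have "K < k0"
  proof (rule ccontr)
    assume "\<not> K < k0"
    then have "(2::real)^(p*k0) \<le> 2^(p*K)" by (intro power_increasing) auto
    then have "1 / 2^(p*K) \<le> 1 / (2::real)^(p*k0)" by (intro divide_left_mono) auto
    with k0 assms(3) show False by linarith
  qed
  then obtain k where k: "k0 = Suc k" "K \<le> k" by (metis Suc_le_eq less_imp_Suc_add le_add1)
  have "\<not> 1 / (2::real)^(p*k) < c" using k(1) not_less_Least[of k "\<lambda>k. 1 / (2::real)^(p*k) < c"] unfolding k0_def by simp
  then show ?thesis using k k0 by (intro exI[of _ k]) auto
qed

lemma lvl_upper:
  fixes c :: real and p K :: nat
  assumes "0 < c" "0 < p" "c < 1 / 2^(p*K)"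
  shows "\<exists>k>K. 1 / 2^(p*k) \<le> c \<and> c < 1 / 2^(p*(k-1))"
proof -
  obtain n where n: "1 / c < 2 ^ n" using real_arch_pow[of 2 "1/c"] by auto
  have "(2::real) ^ n \<le> 2 ^ (p*n)" using assms(2) by (intro power_increasing) auto
  with n have h: "1 / c < 2^(p*n)" by linarith
  have "1 / 2^(p*n) \<le> c" using h assms(1) by (simp add: field_simps)
  then have ex: "\<exists>k. 1 / 2^(p*k) \<le> c" by blast
  define k0 where "k0 = (LEAST k. 1 / (2::real)^(p*k) \<le> c)"
  have k0: "1 / 2^(p*k0) \<le> c" unfolding k0_def by (rule LeastI_ex[OF ex])
  have "K < k0"
  proof (rule ccontr)
    assume "\<not> K < k0"
    then have "(2::real)^(p*k0) \<le> 2^(p*K)" by (intro power_increasing) auto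
    then have "1 / 2^(p*K) \<le> 1 / (2::real)^(p*k0)" by (intro divide_left_mono) auto
    with k0 assms(3) show False by linarith
  qed
  have "\<not> 1 / (2::real)^(p*(k0-1)) \<le> c"
    using not_less_Least[of "k0 - 1" "\<lambda>k. 1 / (2::real)^(p*k) \<le> c"] \<open>K < k0\<close> unfolding k0_def by simp
  then show ?thesis using k0 \<open>K < k0\<close> by (intro exI[of _ k0]) auto
qed



context mpres begin

lemma lower_bound:
  fixes B :: "real \<Rightarrow> 'a set"
  assumes Bm: "\<And>r. B r \<in> sets M" and Bmono: "\<And>r s. r \<le> s \<Longrightarrow> B r \<subseteq> B s"
    and Bpos: "\<And>r. r > 0 \<Longrightarrow> measure M (B r) > 0"
    and Blim: "((\<lambda>r. measure M (B r)) \<longlongrightarrow> 0) (at_right 0)"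
  shows "AE x in M. \<forall>p::nat. 2 \<le> p \<longrightarrow> eventually (\<lambda>r. ereal (1 - 2 / real p) < hit_ratio M T (B r) x) (at_right 0)"
proof -
  define U where "U t = \<Union>{B r | r. measure M (B r) \<le> t}" for t
  have U: "U t \<in> sets M \<and> measure M (U t) \<le> t" if "t \<ge> 0" for t
    unfolding U_def by (rule level_union[OF _ Bm Bmono that]) unfold_locales
  have BU: "B r \<subseteq> U t" if "measure M (B r) \<le> t" for r t using that unfolding U_def by blast
  have AEp: "AE x in M. eventually (\<lambda>k. enat (2^((p-1)*k)) < hit_time T (U (1/2^(p*k))) x) sequentially"
    if p: "p \<ge> 1" for p :: nat
  proof -
    define W where "W k = {x. hit_time T (U (1/2^(p*k))) x \<le> enat (2^((p-1)*k))}" for k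
    have W: "W k \<in> sets M \<and> measure M (W k) \<le> real (2^((p-1)*k)) * (1/2^(p*k))" for k
    proof -
      have "U (1/2^(p*k)) \<in> sets M" "measure M (U (1/2^(p*k))) \<le> 1/2^(p*k)" using U[of "1/2^(p*k)"] by auto
      then show ?thesis unfolding W_def using hit_set_measure[of "U (1/2^(p*k))" "2^((p-1)*k)"]
        by (meson mult_left_mono of_nat_0_le_iff order_trans)
    qed
    have eq: "real (2^((p-1)*k)) * (1/2^(p*k)) = (1/2::real)^k" for k
    proof -
      have "(2::real)^(p*k) = 2^((p-1)*k) * 2^k" using p
        by (metis (no_types, lifting) add.commute le_add_diff_inverse mult.commute mult_Suc_right plus_1_eq_Suc power_add)
      then show ?thesis by (simp add: power_divide)
    qed
    have sW: "summable (\<lambda>k. measure M (W k))"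
    proof (rule summable_comparison_test[of _ "\<lambda>k. (1/2::real)^k"])
      show "\<exists>N. \<forall>n\<ge>N. norm (measure M (W n)) \<le> (1/2)^n" using W eq by auto
      show "summable (\<lambda>k. (1/2::real)^k)" by (rule summable_geometric) simp
    qed
    have "AE x in M. eventually (\<lambda>k. x \<in> space M - W k) sequentially"
      by (rule borel_cantelli_AE1) (use W sW in \<open>auto simp: less_top[symmetric]\<close>)
    then show ?thesis
      by (rule eventually_mono) (auto simp: W_def not_le elim!: eventually_mono)
  qed
  have "AE x in M. \<forall>p::nat. p \<ge> 1 \<longrightarrow> eventually (\<lambda>k. enat (2^((p-1)*k)) < hit_time T (U (1/2^(p*k))) x) sequentially"
    unfolding AE_all_countable using AEp by auto
  then show ?thesis
  proof (rule eventually_mono)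
    fix x assume H: "\<forall>p::nat. p \<ge> 1 \<longrightarrow> eventually (\<lambda>k. enat (2^((p-1)*k)) < hit_time T (U (1/2^(p*k))) x) sequentially"
    show "\<forall>p::nat. 2 \<le> p \<longrightarrow> eventually (\<lambda>r. ereal (1 - 2 / real p) < hit_ratio M T (B r) x) (at_right 0)"
    proof (intro allI impI)
      fix p :: nat assume p2: "2 \<le> p"
      have "eventually (\<lambda>k. enat (2^((p-1)*k)) < hit_time T (U (1/2^(p*k))) x) sequentially"
        using H p2 by simp
      then obtain K0 where K0: "\<And>k. k \<ge> K0 \<Longrightarrow> enat (2^((p-1)*k)) < hit_time T (U (1/2^(p*k))) x"
        unfolding eventually_sequentially by blast
      define K1 where "K1 = K0 + p"
      have ev1: "eventually (\<lambda>r. measure M (B r) < 1/2^(p*K1)) (at_right (0::real))"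
        using order_tendstoD(2)[OF Blim, of "1/2^(p*K1)"] by simp
      show "eventually (\<lambda>r. ereal (1 - 2 / real p) < hit_ratio M T (B r) x) (at_right 0)"
        using ev1 eventually_at_right_less[of "0::real"]
      proof (eventually_elim)
        case (elim r)
        define c where "c = measure M (B r)"
        have c0: "0 < c" using Bpos elim c_def by auto
        obtain k where k: "k \<ge> K1" "c \<le> 1/2^(p*k)" "1/2^(p*(k+1)) < c"
          using lvl_lower[of c p K1] c0 p2 elim c_def by auto
        have "B r \<subseteq> U (1/2^(p*k))" using BU k(2) c_def by simp
        then have "hit_time T (U (1/2^(p*k))) x \<le> hit_time T (B r) x" by (rule hit_mono)
        moreover have "enat (2^((p-1)*k)) < hit_time T (U (1/2^(p*k))) x" using K0 k(1) K1_def by simp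
        ultimately have lt: "enat (2^((p-1)*k)) < hit_time T (B r) x" by simp
        show ?case
        proof (cases "hit_time T (B r) x")
          case (enat m)
          have m: "real (2^((p-1)*k)) < real m" using lt enat by simp
          have r1: "real (p-1) * real k * ln 2 < ln (real m)"
          proof -
            have "ln (real (2^((p-1)*k))) < ln (real m)" using m by (intro ln_less_cancel_iff[THEN iffD2]) auto
            moreover have "ln (real (2^((p-1)*k))) = real (p-1) * real k * ln 2" by (simp add: ln_realpow)
            ultimately show ?thesis by simp
          qed
          have r2: "- ln c < real p * (real k + 1) * ln 2"
          proof -
            have "ln (1/2^(p*(k+1))) < ln c" using k(3) c0 by (intro ln_less_cancel_iff[THEN iffD2]) auto
            moreover have "ln (1/2^(p*(k+1)) :: real) = - (real p * (real k + 1) * ln 2)"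
              by (simp add: ln_div ln_realpow algebra_simps)
            ultimately show ?thesis by simp
          qed
          have r3: "real p * real k * ln 2 \<le> - ln c"
          proof -
            have "ln c \<le> ln (1/2^(p*k))" using k(2) c0 by (intro ln_le_cancel_iff[THEN iffD2]) auto
            moreover have "ln (1/2^(p*k) :: real) = - (real p * real k * ln 2)"
              by (simp add: ln_div ln_realpow)
            ultimately show ?thesis by simp
          qed
          have kp: "real k \<ge> real p" using k(1) K1_def by simp
          have p2r: "real p \<ge> 2" using p2 by simp
          have ln2: "ln (2::real) > 0" by simp
          have pos: "- ln c > 0" using r3 kp p2r ln2
            by (smt (verit, best) mult_pos_pos)
          have "(1 - 2 / real p) * (- ln c) \<le> (1 - 2 / real p) * (real p * (real k + 1) * ln 2)"
            using r2 p2r by (intro mult_left_mono) (auto simp: field_simps)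
          also have "\<dots> = (real p - 2) * (real k + 1) * ln 2" using p2r by (simp add: field_simps)
          also have "\<dots> \<le> (real p - 1) * real k * ln 2"
            using kp ln2 by (intro mult_right_mono) (auto simp: algebra_simps)
          also have "\<dots> < ln (real m)" using r1 p2 by (simp add: of_nat_diff)
          finally have X: "(1 - 2 / real p) * (- ln c) < ln (real m)" .
          have "1 - 2 / real p < ln (real m) / (- ln c)" using X pos_less_divide_eq[OF pos] by blast
          moreover have "hit_ratio M T (B r) x = ereal (ln (real m) / - ln c)" using ratio_enat[of T "B r" x m M] enat c_def by simp
          ultimately show ?thesis by simp
        qed (simp add: ratio_inf)
      qed
    qed
  qed
qed

end


lemma ennreal_sum_infinite:
  fixes g :: "nat \<Rightarrow> real"
  assumes g0: "\<And>n. 0 \<le> g n" and unb: "\<And>Bd. \<exists>N. Bd < (\<Sum>n<N. g n)"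
  shows "(\<Sum>n. ennreal (g n)) = \<infinity>"
proof (rule ccontr)
  assume "(\<Sum>n. ennreal (g n)) \<noteq> \<infinity>"
  then have s: "summable g" using summable_suminf_not_top[of g] g0 by simp
  obtain N where N: "suminf g < (\<Sum>n<N. g n)" using unb by blast
  have "(\<Sum>n<N. g n) \<le> suminf g" using s g0 by (intro sum_le_suminf) auto
  with N show False by simp
qed

context mpres begin

lemma upper_liminf:
  fixes B :: "real \<Rightarrow> 'a set" and p :: nat
  assumes Bm: "\<And>r. B r \<in> sets M" and Bmono: "\<And>r s. r \<le> s \<Longrightarrow> B r \<subseteq> B s"
    and Bpos: "\<And>r. r > 0 \<Longrightarrow> measure M (B r) > 0"
    and Blim: "((\<lambda>r. measure M (B r)) \<longlongrightarrow> 0) (at_right 0)"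
    and H: "\<And>r::nat \<Rightarrow> real. (\<forall>n. B (r (Suc n)) \<subseteq> B (r n)) \<and> (\<Sum>n. emeasure M (B (r n))) = \<infinity> \<Longrightarrow>
         measure M {x. \<exists>\<^sub>\<infinity> n. x \<in> (T ^^ n) -` B (r n)} = 1"
    and p1: "1 \<le> p"
  shows "AE x in M. (\<exists>\<^sub>F \<rho> in at_right 0. hit_ratio M T (B \<rho>) x \<le> ereal (1 + 1 / real p))"
proof -
  define \<mu> where "\<mu> k = measure M (B (1 / (real k + 1)))" for k :: nat
  have \<mu>pos: "0 < \<mu> k" for k unfolding \<mu>_def by (rule Bpos) simp
  have \<mu>le1: "\<mu> k \<le> 1" for k unfolding \<mu>_def by simp
  have \<mu>anti: "\<mu> k' \<le> \<mu> k" if "k \<le> k'" for k k'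
  proof -
    have "1 / (real k' + 1) \<le> 1 / (real k + 1)" using that by (intro divide_left_mono) auto
    then have "B (1 / (real k' + 1)) \<subseteq> B (1 / (real k + 1))" by (rule Bmono)
    then show ?thesis unfolding \<mu>_def using Bm by (intro finite_measure_mono) auto
  qed
  have \<mu>small: "\<exists>k. \<mu> k < e" if "e > 0" for e
  proof -
    have "eventually (\<lambda>r. measure M (B r) < e) (at_right (0::real))"
      using order_tendstoD(2)[OF Blim that] .
    then obtain b where b: "b > 0" "\<And>r. r > 0 \<Longrightarrow> r < b \<Longrightarrow> measure M (B r) < e"
      unfolding eventually_at_right_field by auto
    obtain k where "inverse (real (Suc k)) < b" using reals_Archimedean[OF b(1)] by blast
    then have "1 / (real k + 1) < b" by (simp add: inverse_eq_divide add.commute)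
    then show ?thesis unfolding \<mu>_def using b(2)[of "1 / (real k + 1)"] by (intro exI[of _ k]) simp
  qed
  define Q where "Q k n \<longleftrightarrow> \<mu> k ^ (p+1) * (real n + 1) ^ p \<le> 1" for k n :: nat
  have Qex: "\<exists>k. Q k n" for n
  proof -
    have "0 < 1 / (real n + 1) ^ p" by simp
    then obtain k where k: "\<mu> k < 1 / (real n + 1) ^ p" using \<mu>small by blast
    have "\<mu> k ^ (p+1) \<le> \<mu> k ^ 1" using \<mu>pos[of k] \<mu>le1[of k] by (intro power_decreasing) auto
    then have "\<mu> k ^ (p+1) \<le> \<mu> k" by simp
    then have "\<mu> k ^ (p+1) * (real n + 1) ^ p \<le> \<mu> k * (real n + 1) ^ p" by (intro mult_right_mono) auto
    also have "\<dots> \<le> 1" using k by (simp add: field_simps)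
    finally show ?thesis unfolding Q_def by blast
  qed
  define K where "K n = (LEAST k. Q k n)" for n
  have QK: "Q (K n) n" for n unfolding K_def by (rule LeastI_ex[OF Qex])
  have Qmono: "Q k n" if "Q k n'" "n \<le> n'" for k n n'
  proof -
    have "(real n + 1) ^ p \<le> (real n' + 1) ^ p" using that(2) by (intro power_mono) auto
    then have "\<mu> k ^ (p+1) * (real n + 1) ^ p \<le> \<mu> k ^ (p+1) * (real n' + 1) ^ p"
      using \<mu>pos[of k] by (intro mult_left_mono) auto
    then show ?thesis using that(1) unfolding Q_def by linarith
  qed
  have Kmono: "K n \<le> K n'" if "n \<le> n'" for n n'
    unfolding K_def[of n] by (rule Least_le) (rule Qmono[OF QK that])
  define r where "r n = 1 / (real (K n) + 1)" for n
  have dec: "B (r (Suc n)) \<subseteq> B (r n)" for n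
    unfolding r_def using Kmono[of n "Suc n"] by (intro Bmono divide_left_mono) auto
  have mr: "measure M (B (r n)) = \<mu> (K n)" for n unfolding r_def \<mu>_def by simp
  have unb: "\<exists>N. Bd < (\<Sum>n<N. measure M (B (r n)))" for Bd
  proof -
    define D where "D = max Bd 0"
    have "0 < 1 / (D + 1) ^ p" unfolding D_def by simp
    then obtain k where k: "\<mu> k < 1 / (D + 1) ^ p" using \<mu>small by blast
    obtain N0 where N0: "1 / \<mu> k ^ (p+1) < real N0" using reals_Archimedean2 by blast
    have exN: "\<exists>N. \<not> Q k N"
    proof
      have "(real N0 + 1) \<le> (real N0 + 1) ^ p" using p1 by (intro power_increasing[of 1 p, simplified]) auto
      moreover have "1 < \<mu> k ^ (p+1) * (real N0 + 1)"
      proof -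
        have pp: "0 < \<mu> k ^ (p+1)" using \<mu>pos[of k] by simp
        have "1 < real N0 * \<mu> k ^ (p+1)" using N0 pp by (simp add: divide_less_eq)
        moreover have "real N0 * \<mu> k ^ (p+1) \<le> \<mu> k ^ (p+1) * (real N0 + 1)" using pp by (simp add: algebra_simps)
        ultimately show ?thesis by linarith
      qed
      moreover have "\<mu> k ^ (p+1) * (real N0 + 1) \<le> \<mu> k ^ (p+1) * (real N0 + 1) ^ p"
        using calculation(1) \<mu>pos[of k] by (intro mult_left_mono) auto
      ultimately have "1 < \<mu> k ^ (p+1) * (real N0 + 1) ^ p" by linarith
      then show "\<not> Q k N0" unfolding Q_def by simp
    qed
    define N where "N = (LEAST N. \<not> Q k N)"
    have NQ: "\<not> Q k N" unfolding N_def by (rule LeastI_ex[OF exN])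
    have small: "Q k n" if "n < N" for n using not_less_Least[of n "\<lambda>N. \<not> Q k N"] that unfolding N_def by blast
    have "real N * \<mu> k \<le> (\<Sum>n<N. measure M (B (r n)))"
    proof -
      have "(\<Sum>n<N. \<mu> k) \<le> (\<Sum>n<N. measure M (B (r n)))"
      proof (intro sum_mono)
        fix n assume "n \<in> {..<N}"
        then have "K n \<le> k" unfolding K_def using small by (intro Least_le) simp
        then show "\<mu> k \<le> measure M (B (r n))" using mr \<mu>anti by simp
      qed
      then show ?thesis by simp
    qed
    moreover have "D + 1 < (real N + 1) * \<mu> k"
    proof (rule power_less_imp_less_base[of _ p])
      have a: "1 < \<mu> k ^ (p+1) * (real N + 1) ^ p" using NQ unfolding Q_def by simp
      have "(D + 1) ^ p < 1 / \<mu> k" using k \<mu>pos[of k] D_def by (simp add: field_simps)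
      also have "1 / \<mu> k < ((real N + 1) * \<mu> k) ^ p"
      proof -
        have e: "((real N + 1) * \<mu> k) ^ p = (real N + 1) ^ p * \<mu> k ^ p" by (simp add: power_mult_distrib)
        have "1 < ((real N + 1) ^ p * \<mu> k ^ p) * \<mu> k" using a by (simp add: algebra_simps)
        then show ?thesis unfolding e using \<mu>pos[of k] by (simp add: divide_less_eq)
      qed
      finally show "(D + 1) ^ p < ((real N + 1) * \<mu> k) ^ p" .
      show "0 \<le> (real N + 1) * \<mu> k" using \<mu>pos[of k] by simp
    qed
    ultimately have "Bd < (\<Sum>n<N. measure M (B (r n)))" using \<mu>le1[of k] D_def by (simp add: algebra_simps)
    then show ?thesis by blast
  qed
  have "(\<Sum>n. ennreal (measure M (B (r n)))) = \<infinity>"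
    by (rule ennreal_sum_infinite) (use unb in auto)
  then have "(\<Sum>n. emeasure M (B (r n))) = \<infinity>" by (simp add: emeasure_eq_measure)
  then have "measure M {x. \<exists>\<^sub>\<infinity> n. x \<in> (T ^^ n) -` B (r n)} = 1" by (intro H conjI allI dec)
  then have "AE x in M. x \<in> {x. \<exists>\<^sub>\<infinity> n. x \<in> (T ^^ n) -` B (r n)}" by (rule AE_prob_1)
  then show ?thesis
  proof (rule eventually_mono)
    fix x assume "x \<in> {x. \<exists>\<^sub>\<infinity> n. x \<in> (T ^^ n) -` B (r n)}"
    then have inf: "\<exists>\<^sub>\<infinity> n. (T ^^ n) x \<in> B (r n)" by simp
    have evK: "eventually (\<lambda>n. k0 \<le> K n \<and> 1 \<le> n) sequentially" for k0
    proof -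
      have "eventually (\<lambda>n. \<not> Q j n) sequentially" for j
      proof -
        obtain N0 where N0: "1 / \<mu> j ^ (p+1) < real N0" using reals_Archimedean2 by blast
        show ?thesis unfolding eventually_sequentially
        proof (intro exI allI impI)
          fix n assume "N0 \<le> n"
          then have "1 / \<mu> j ^ (p+1) < real n + 1" using N0 by linarith
          then have "1 < \<mu> j ^ (p+1) * (real n + 1)" using \<mu>pos[of j] by (simp add: field_simps)
          moreover have "(real n + 1) \<le> (real n + 1) ^ p" using p1 by (intro power_increasing[of 1 p, simplified]) auto
          moreover have "\<mu> j ^ (p+1) * (real n + 1) \<le> \<mu> j ^ (p+1) * (real n + 1) ^ p"
            using calculation(2) \<mu>pos[of j] by (intro mult_left_mono) auto
          ultimately have "1 < \<mu> j ^ (p+1) * (real n + 1) ^ p" by linarith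
          then show "\<not> Q j n" unfolding Q_def by simp
        qed
      qed
      then have "eventually (\<lambda>n. \<forall>j\<in>{..<k0}. \<not> Q j n) sequentially"
        by (intro eventually_ball_finite) auto
      moreover have "eventually (\<lambda>n. 1 \<le> n) sequentially" by (rule eventually_ge_at_top)
      ultimately show ?thesis
      proof (eventually_elim)
        case (elim n)
        have "k0 \<le> K n"
        proof (rule ccontr)
          assume "\<not> k0 \<le> K n"
          then show False using elim QK[of n] by auto
        qed
        then show ?case using elim by simp
      qed
    qed
    show "\<exists>\<^sub>F \<rho> in at_right 0. hit_ratio M T (B \<rho>) x \<le> ereal (1 + 1 / real p)"
      unfolding frequently_def
    proof
      assume "eventually (\<lambda>\<rho>. \<not> hit_ratio M T (B \<rho>) x \<le> ereal (1 + 1 / real p)) (at_right 0)"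
      then obtain b where b: "b > 0" "\<And>y. y > 0 \<Longrightarrow> y < b \<Longrightarrow> \<not> hit_ratio M T (B y) x \<le> ereal (1 + 1 / real p)"
        unfolding eventually_at_right_field by auto
      obtain k0 where "inverse (real (Suc k0)) < b" using reals_Archimedean[OF b(1)] by blast
      then have k0: "1 / (real k0 + 1) < b" by (simp add: inverse_eq_divide add.commute)
      have "\<exists>\<^sub>\<infinity> n. (k0 \<le> K n \<and> 1 \<le> n) \<and> (T ^^ n) x \<in> B (r n)"
        using frequently_eventually_conj[OF inf[unfolded cofinite_eq_sequentially] evK] by (simp add: cofinite_eq_sequentially)
      then obtain n where n: "k0 \<le> K n" "1 \<le> n" "(T ^^ n) x \<in> B (r n)" using frequently_ex by blast
      have rpos: "0 < r n" unfolding r_def by simp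
      have "r n \<le> 1 / (real k0 + 1)" unfolding r_def using n(1) by (intro divide_left_mono) auto
      with k0 have rb: "r n < b" by simp
      have "hit_time T (B (r n)) x \<le> enat n" using n by (intro hit_le[THEN iffD2]) blast
      then obtain m where m: "hit_time T (B (r n)) x = enat m" "m \<le> n" by (cases "hit_time T (B (r n)) x") auto
      have m1: "1 \<le> m" using hit_ge1[OF m(1)] .
      define c where "c = \<mu> (K n)"
      have c0: "0 < c" unfolding c_def by (rule \<mu>pos)
      have Qn: "c ^ (p+1) * (real n + 1) ^ p \<le> 1" using QK[of n] unfolding Q_def c_def .
      have c1: "c < 1"
      proof (rule ccontr)
        assume "\<not> c < 1"
        then have "1 \<le> c ^ (p+1)" by (intro one_le_power) simp
        moreover have "1 < (real n + 1) ^ p" using n(2) p1 by (simp add: one_less_power)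
        moreover have "1 * (real n + 1) ^ p \<le> c ^ (p+1) * (real n + 1) ^ p"
          using calculation(1) by (intro mult_right_mono) auto
        ultimately have "1 < c ^ (p+1) * (real n + 1) ^ p" by linarith
        with Qn show False by simp
      qed
      have "ln (c ^ (p+1) * (real n + 1) ^ p) \<le> 0" using Qn c0 by (simp add: ln_le_zero_iff)
      then have l1: "real (p+1) * ln c + real p * ln (real n + 1) \<le> 0" using c0 by (simp add: ln_mult ln_realpow algebra_simps)
      have l2: "ln (real m) \<le> ln (real n + 1)" using m m1 by simp
      have lc: "ln c < 0" using c0 c1 by simp
      have "real p * ln (real m) \<le> (real p + 1) * (- ln c)"
      proof -
        have "real p * ln (real m) \<le> real p * ln (real n + 1)" using l2 by (intro mult_left_mono) auto
        then show ?thesis using l1 by (simp add: algebra_simps)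
      qed
      then have "ln (real m) / (- ln c) \<le> 1 + 1 / real p" using lc p1
        by (simp add: divide_le_eq field_simps)
      moreover have "hit_ratio M T (B (r n)) x = ereal (ln (real m) / - ln c)"
        using ratio_enat[of T "B (r n)" x m M] m mr c_def by simp
      ultimately have "hit_ratio M T (B (r n)) x \<le> ereal (1 + 1 / real p)" by simp
      with b(2)[OF rpos rb] show False by simp
    qed
  qed
qed

end


locale up2 = mpres M T for M :: "'a measure" and T +
  fixes B :: "real \<Rightarrow> 'a set" and p :: nat
  assumes Bm: "\<And>r. B r \<in> sets M" and Bmono: "\<And>r s. r \<le> s \<Longrightarrow> B r \<subseteq> B s"
    and Bpos: "\<And>r. r > 0 \<Longrightarrow> measure M (B r) > 0"
    and Blim: "((\<lambda>r. measure M (B r)) \<longlongrightarrow> 0) (at_right 0)"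
    and Bcont: "\<And>s. (\<Inter>n. B (s + 1 / (real n + 1))) = B s"
    and p1: "1 \<le> p"
begin

definition f where "f \<rho> = measure M (B \<rho>)"
definition lev :: "nat \<Rightarrow> real" where "lev k = 1 / 2^(p*k)"
definition rel where "rel k \<longleftrightarrow> (\<exists>\<rho>>0. lev k \<le> f \<rho> \<and> f \<rho> < 2^p * lev k)"
definition S where "S k = {\<rho>. 0 < \<rho> \<and> lev k \<le> f \<rho>}"
definition \<sigma> where "\<sigma> k = Inf (S k)"
definition \<nu> where "\<nu> j = (LEAST k. j \<le> k \<and> rel k)"
definition \<kappa> where "\<kappa> n = floor_log n div (p+1)"
definition r where "r n = \<sigma> (\<nu> (\<kappa> n))"
definition m where "m n = f (r n)"

lemma f_mono: "\<rho> \<le> \<rho>' \<Longrightarrow> f \<rho> \<le> f \<rho>'"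
  unfolding f_def using Bmono Bm by (intro finite_measure_mono) auto

lemma f_nonneg: "0 \<le> f \<rho>" unfolding f_def by simp

lemma lev_pos: "0 < lev k" unfolding lev_def by simp

lemma lev_anti: "k \<le> k' \<Longrightarrow> lev k' \<le> lev k"
  unfolding lev_def by (intro divide_left_mono power_increasing) auto

lemma lev_pred: "1 \<le> k \<Longrightarrow> 1 / 2^(p*(k-1)) = 2^p * lev k"
proof -
  assume k: "1 \<le> k"
  have "(2::real)^(p*k) = 2^(p*(k-1)) * 2^p"
    using k by (metis (no_types, lifting) add.commute le_add_diff_inverse mult.commute mult_Suc_right plus_1_eq_Suc power_add)
  then show ?thesis unfolding lev_def by simp
qed

lemma sigma_props:
  assumes "rel k"
  shows "0 \<le> \<sigma> k" "lev k \<le> f (\<sigma> k)" "f (\<sigma> k) < 2^p * lev k" "\<And>\<rho>. 0 < \<rho> \<Longrightarrow> lev k \<le> f \<rho> \<Longrightarrow> \<sigma> k \<le> \<rho>"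
proof -
  obtain \<rho>0 where \<rho>0: "0 < \<rho>0" "lev k \<le> f \<rho>0" "f \<rho>0 < 2^p * lev k" using assms unfolding rel_def by blast
  have ne: "S k \<noteq> {}" using \<rho>0 unfolding S_def by auto
  have bdd: "bdd_below (S k)" unfolding S_def by (rule bdd_belowI[of _ 0]) auto
  show low: "\<sigma> k \<le> \<rho>" if "0 < \<rho>" "lev k \<le> f \<rho>" for \<rho>
    unfolding \<sigma>_def using that bdd by (intro cInf_lower) (auto simp: S_def)
  show "0 \<le> \<sigma> k" unfolding \<sigma>_def using ne by (intro cInf_greatest) (auto simp: S_def)
  show "f (\<sigma> k) < 2^p * lev k" using low[OF \<rho>0(1,2)] f_mono \<rho>0(3) by (meson le_less_trans)
  have each: "lev k \<le> f (\<sigma> k + 1 / (real n + 1))" for n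
  proof -
    have "Inf (S k) < \<sigma> k + 1 / (real n + 1)" unfolding \<sigma>_def by simp
    then obtain \<rho> where \<rho>: "\<rho> \<in> S k" "\<rho> < \<sigma> k + 1 / (real n + 1)" using cInf_less_iff[OF ne bdd] by blast
    have "f \<rho> \<le> f (\<sigma> k + 1 / (real n + 1))" using \<rho>(2) by (intro f_mono) simp
    then show ?thesis using \<rho>(1) unfolding S_def by simp
  qed
  have dec: "decseq (\<lambda>n. B (\<sigma> k + 1 / (real n + 1)))"
    unfolding decseq_def by (auto intro!: Bmono divide_left_mono)
  have lim: "(\<lambda>n. measure M (B (\<sigma> k + 1 / (real n + 1)))) \<longlonglongrightarrow> measure M (\<Inter>n. B (\<sigma> k + 1 / (real n + 1)))"
    by (rule finite_Lim_measure_decseq) (use Bm dec in auto)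
  then have "(\<lambda>n. f (\<sigma> k + 1 / (real n + 1))) \<longlonglongrightarrow> f (\<sigma> k)" unfolding f_def Bcont .
  then show "lev k \<le> f (\<sigma> k)" by (rule LIMSEQ_le_const) (use each in auto)
qed

lemma rel_inf: "\<exists>k\<ge>j. rel k"
proof -
  have "eventually (\<lambda>\<rho>. f \<rho> < lev j) (at_right (0::real))"
    unfolding f_def using order_tendstoD(2)[OF Blim lev_pos] .
  then obtain b where b: "b > 0" "\<And>\<rho>. \<rho> > 0 \<Longrightarrow> \<rho> < b \<Longrightarrow> f \<rho> < lev j"
    unfolding eventually_at_right_field by auto
  define \<rho> where "\<rho> = b / 2"
  have \<rho>: "0 < \<rho>" "f \<rho> < lev j" using b unfolding \<rho>_def by auto
  have c0: "0 < f \<rho>" using Bpos \<rho>(1) unfolding f_def by simp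
  obtain k where k: "k > j" "1 / 2^(p*k) \<le> f \<rho>" "f \<rho> < 1 / 2^(p*(k-1))"
    using lvl_upper[of "f \<rho>" p j] c0 p1 \<rho>(2) unfolding lev_def by auto
  have "rel k" unfolding rel_def using \<rho>(1) k lev_pred[of k] unfolding lev_def by auto
  then show ?thesis using k(1) by (intro exI[of _ k]) auto
qed

lemma nu_props: "j \<le> \<nu> j" "rel (\<nu> j)"
proof -
  have "j \<le> \<nu> j \<and> rel (\<nu> j)" unfolding \<nu>_def by (rule LeastI_ex) (use rel_inf in blast)
  then show "j \<le> \<nu> j" "rel (\<nu> j)" by auto
qed

lemma nu_rel: "rel k \<Longrightarrow> \<nu> k = k"
  unfolding \<nu>_def by (rule Least_equality) auto

lemma nu_mono: "j \<le> j' \<Longrightarrow> \<nu> j \<le> \<nu> j'"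
  unfolding \<nu>_def[of j] using nu_props[of j'] by (intro Least_le) auto

lemma sigma_anti: "rel k \<Longrightarrow> rel k' \<Longrightarrow> k \<le> k' \<Longrightarrow> \<sigma> k' \<le> \<sigma> k"
proof -
  assume a: "rel k" "rel k'" "k \<le> k'"
  have ne: "S k \<noteq> {}" using a(1) unfolding rel_def S_def by auto
  have bdd: "bdd_below (S k')" unfolding S_def by (rule bdd_belowI[of _ 0]) auto
  have "S k \<subseteq> S k'" unfolding S_def using lev_anti[OF a(3)] by auto
  then show ?thesis unfolding \<sigma>_def using ne bdd by (intro cInf_superset_mono)
qed

lemma kappa_eq:
  assumes "2^((p+1)*k) \<le> n" "n < 2^((p+1)*(k+1))"
  shows "\<kappa> n = k"
proof -
  have "(1::nat) \<le> 2^((p+1)*k)" by simp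
  then have n0: "n > 0" using assms(1) by linarith
  define l where "l = floor_log n"
  have l1: "2^l \<le> n" unfolding l_def using floor_log_exp2_le[OF n0] .
  have l2: "n < 2 * 2^l" unfolding l_def by (rule floor_log_exp2_gt)
  have "(2::nat)^((p+1)*k) < 2^(Suc l)" using assms(1) l2 by simp
  then have "(p+1)*k < Suc l" using power_less_imp_less_exp[of "2::nat" "(p+1)*k" "Suc l"] by simp
  then have a: "(p+1)*k \<le> l" by simp
  have "(2::nat)^l < 2^((p+1)*(k+1))" using l1 assms(2) by simp
  then have b: "l < (p+1)*(k+1)" using power_less_imp_less_exp[of "2::nat" l "(p+1)*(k+1)"] by simp
  show ?thesis unfolding \<kappa>_def l_def[symmetric] by (rule div_nat_eqI) (use a b in auto)
qed

lemma kappa_mono: "n \<le> n' \<Longrightarrow> \<kappa> n \<le> \<kappa> n'"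
  unfolding \<kappa>_def by (intro div_le_mono floor_log_le_iff)

lemma r_anti: "n \<le> n' \<Longrightarrow> r n' \<le> r n"
  unfolding r_def using nu_props nu_mono kappa_mono by (intro sigma_anti) auto

lemma m_pos: "0 < m n"
  unfolding m_def r_def using sigma_props(2)[OF nu_props(2)] lev_pos by (meson less_le_trans)

lemma m_upper: "m n < 2^p * lev (\<kappa> n)"
proof -
  have "m n < 2^p * lev (\<nu> (\<kappa> n))" unfolding m_def r_def by (rule sigma_props(3)[OF nu_props(2)])
  also have "\<dots> \<le> 2^p * lev (\<kappa> n)" using lev_anti[OF nu_props(1)] by simp
  finally show ?thesis .
qed

lemma m_lower: "rel k \<Longrightarrow> \<kappa> n = k \<Longrightarrow> lev k \<le> m n \<and> r n = \<sigma> k"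
  unfolding m_def r_def using sigma_props(2) nu_rel by simp

lemma pow_split: "(2::real)^((p+1)*(k+1)) = 2^((p+1)*k) * 2^(p+1)" "(2::real)^((p+1)*k) * lev k = 2^k"
proof -
  have e: "(p+1)*(k+1) = (p+1)*k + (p+1)" by simp
  show "(2::real)^((p+1)*(k+1)) = 2^((p+1)*k) * 2^(p+1)" by (simp only: e power_add)
  have e2: "(p+1)*k = p*k + k" by simp
  have "(2::real)^((p+1)*k) = 2^(p*k) * 2^k" by (simp only: e2 power_add)
  then show "(2::real)^((p+1)*k) * lev k = 2^k" unfolding lev_def by simp
qed

lemma pow_e: "(2::real)^(2*p+1) = 2^(p+1) * 2^p"
proof -
  have e: "2*p+1 = (p+1)+p" by simp
  show ?thesis by (simp only: e power_add)
qed

lemma in_blk: "n \<in> {2^((p+1)*k)..<2^((p+1)*(k+1))} \<Longrightarrow> \<kappa> n = k"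
  by (rule kappa_eq) auto

lemma blk_upper: "(\<Sum>n\<in>{2^((p+1)*k)..<2^((p+1)*(k+1))}. m n) \<le> 2^(2*p+1) * 2^k"
proof -
  have "(\<Sum>n\<in>{2^((p+1)*k)..<2^((p+1)*(k+1))}. m n) \<le> real (card {2^((p+1)*k)..<(2::nat)^((p+1)*(k+1))}) * (2^p * lev k)"
  proof (rule sum_bounded_above)
    fix n assume "n \<in> {2^((p+1)*k)..<(2::nat)^((p+1)*(k+1))}"
    then have "\<kappa> n = k" by (rule in_blk)
    then show "m n \<le> 2^p * lev k" using m_upper[of n] by simp
  qed
  also have "\<dots> \<le> 2^((p+1)*(k+1)) * (2^p * lev k)"
  proof (rule mult_right_mono)
    have "card {2^((p+1)*k)..<(2::nat)^((p+1)*(k+1))} \<le> 2^((p+1)*(k+1))" by simp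
    then have "real (card {2^((p+1)*k)..<(2::nat)^((p+1)*(k+1))}) \<le> real ((2::nat)^((p+1)*(k+1)))" by (rule of_nat_mono)
    then show "real (card {2^((p+1)*k)..<(2::nat)^((p+1)*(k+1))}) \<le> 2^((p+1)*(k+1))" by simp
    show "0 \<le> 2^p * lev k" using lev_pos[of k] by simp
  qed
  also have "\<dots> = (2^((p+1)*k) * lev k) * (2^(p+1) * 2^p)" unfolding pow_split(1)
    by (simp only: mult.assoc mult.commute mult.left_commute)
  also have "\<dots> = 2^(2*p+1) * 2^k" unfolding pow_split(2) pow_e by simp
  finally show ?thesis .
qed

lemma blk_lower: "rel k \<Longrightarrow> 2^p * 2^k \<le> (\<Sum>n\<in>{2^((p+1)*k)..<2^((p+1)*(k+1))}. m n)"
proof -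
  assume rk: "rel k"
  define X :: nat where "X = 2^((p+1)*k)"
  have cardX: "real (card {2^((p+1)*k)..<(2::nat)^((p+1)*(k+1))}) = real X * 2^(p+1) - real X"
  proof -
    have e: "(p+1)*(k+1) = (p+1)*k + (p+1)" by simp
    have "(2::nat)^((p+1)*(k+1)) = X * 2^(p+1)" unfolding X_def by (simp only: e power_add)
    moreover have "X \<le> X * 2^(p+1)" by simp
    ultimately show ?thesis unfolding X_def by (simp add: of_nat_diff)
  qed
  have "real X * 2^p \<le> real X * 2^(p+1) - real X"
  proof -
    have "(2::real)^p \<ge> 1" by simp
    then have "real X * 1 \<le> real X * 2^p" by (intro mult_left_mono) auto
    then have "real X * 2^p + real X \<le> real X * 2^(p+1)" by (simp add: algebra_simps)
    then show ?thesis by simp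
  qed
  then have "real X * 2^p * lev k \<le> real (card {2^((p+1)*k)..<(2::nat)^((p+1)*(k+1))}) * lev k"
    unfolding cardX using less_imp_le[OF lev_pos[of k]] by (intro mult_right_mono) auto
  also have "\<dots> \<le> (\<Sum>n\<in>{2^((p+1)*k)..<2^((p+1)*(k+1))}. m n)"
  proof (rule sum_bounded_below)
    fix n assume "n \<in> {2^((p+1)*k)..<(2::nat)^((p+1)*(k+1))}"
    then have "\<kappa> n = k" by (rule in_blk)
    then show "lev k \<le> m n" using m_lower[OF rk] by simp
  qed
  finally have F: "real X * 2^p * lev k \<le> (\<Sum>n\<in>{2^((p+1)*k)..<2^((p+1)*(k+1))}. m n)" .
  have "real X * lev k = 2^k" using pow_split(2)[of k] unfolding X_def by simp
  then have E: "real X * 2^p * lev k = 2^p * 2^k" by (metis mult.commute mult.left_commute)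
  show ?thesis using F E by linarith
qed

lemma prefix_upper: "(\<Sum>n\<in>{1..<2^((p+1)*k)}. m n) \<le> 2^(2*p+1) * (2^k - 1)"
proof (induction k)
  case 0 then show ?case by simp
next
  case (Suc k)
  have le: "(1::nat) \<le> 2^((p+1)*k)" "(2::nat)^((p+1)*k) \<le> 2^((p+1)*(k+1))"
    by (simp, rule power_increasing, auto)
  have "(\<Sum>n\<in>{1..<2^((p+1)*(k+1))}. m n) = (\<Sum>n\<in>{1..<2^((p+1)*k)}. m n) + (\<Sum>n\<in>{2^((p+1)*k)..<2^((p+1)*(k+1))}. m n)"
    by (rule sum.atLeastLessThan_concat[OF le, symmetric])
  also have "\<dots> \<le> 2^(2*p+1) * (2^k - 1) + 2^(2*p+1) * 2^k" using Suc.IH blk_upper[of k] by linarith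
  also have "\<dots> = 2^(2*p+1) * (2^(k+1) - 1)"
  proof -
    have "(2::real)^(k+1) = 2 * 2^k" by simp
    then show ?thesis by (simp only: right_diff_distrib)
  qed
  finally show ?case unfolding Suc_eq_plus1 .
qed

end


context up2 begin

lemma m_eq: "m n = measure M (B (r n))" unfolding m_def f_def by simp

lemma r_dec: "\<forall>n. B (r (Suc n)) \<subseteq> B (r n)"
  using r_anti Bmono by simp

lemma sum_inf: "(\<Sum>n. emeasure M (B (r n))) = \<infinity>"
proof -
  have unb: "\<exists>N. Bd < (\<Sum>n<N. m n)" for Bd
  proof -
    obtain j where j: "Bd < 2^j" using real_arch_pow[of 2 Bd] by auto
    define k where "k = \<nu> j"
    have rk: "rel k" and jk: "j \<le> k" unfolding k_def using nu_props by auto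
    have "(2::real)^j \<le> 2^k" using jk by (intro power_increasing) auto
    also have "\<dots> \<le> 2^p * 2^k" by simp
    also have "\<dots> \<le> (\<Sum>n\<in>{2^((p+1)*k)..<2^((p+1)*(k+1))}. m n)" by (rule blk_lower[OF rk])
    also have "\<dots> \<le> (\<Sum>n<2^((p+1)*(k+1)). m n)"
      by (rule sum_mono2) (use m_pos in \<open>auto intro: less_imp_le\<close>)
    finally show ?thesis using j by (intro exI[of _ "2^((p+1)*(k+1))"]) simp
  qed
  have "(\<Sum>n. ennreal (m n)) = \<infinity>"
    by (rule ennreal_sum_infinite) (use unb m_pos in \<open>auto intro: less_imp_le\<close>)
  then show ?thesis by (simp add: emeasure_eq_measure m_eq)
qed

lemma hit_block:
  fixes x N0
  assumes conv: "\<And>N. N0 \<le> N \<Longrightarrow> 1 \<le> N \<Longrightarrow>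
      (1 - 1/2^(p+4)) * (\<Sum>n\<in>{1..N}. m n) < (\<Sum>n\<in>{1..N}. indicator ((T ^^ n) -` B (r n)) x :: real) \<and>
      (\<Sum>n\<in>{1..N}. indicator ((T ^^ n) -` B (r n)) x :: real) < (1 + 1/2^(p+4)) * (\<Sum>n\<in>{1..N}. m n)"
    and rk: "rel k" and big: "N0 + 2 \<le> 2^((p+1)*k)"
  shows "hit_time T (B (\<sigma> k)) x \<le> enat (2^((p+1)*(k+1)) - 1)"
proof -
  define h where "h n = (indicator ((T ^^ n) -` B (r n)) x :: real)" for n
  define \<delta> :: real where "\<delta> = 1/2^(p+4)"
  define M0 :: nat where "M0 = 2^((p+1)*k)"
  define N1 :: nat where "N1 = 2^((p+1)*(k+1))"
  have le: "1 \<le> M0" "M0 \<le> N1" unfolding M0_def N1_def by (simp, rule power_increasing, auto)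
  have M0N1: "{1..M0 - 1} = {1..<M0}" "{1..N1 - 1} = {1..<N1}" using le by auto
  define S where "S = (\<Sum>n\<in>{1..<M0}. m n)"
  define Bk where "Bk = (\<Sum>n\<in>{M0..<N1}. m n)"
  define HS where "HS = (\<Sum>n\<in>{1..<M0}. h n)"
  define HB where "HB = (\<Sum>n\<in>{M0..<N1}. h n)"
  have split1: "(\<Sum>n\<in>{1..<N1}. m n) = S + Bk" unfolding S_def Bk_def by (rule sum.atLeastLessThan_concat[OF le, symmetric])
  have split2: "(\<Sum>n\<in>{1..<N1}. h n) = HS + HB" unfolding HS_def HB_def by (rule sum.atLeastLessThan_concat[OF le, symmetric])
  have c1: "(1 - \<delta>) * (S + Bk) < HS + HB"
  proof -
    have "N0 \<le> N1 - 1" "1 \<le> N1 - 1" using big le unfolding M0_def by auto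
    from conv[OF this] have X: "(1 - \<delta>) * (\<Sum>n\<in>{1..<N1}. m n) < (\<Sum>n\<in>{1..<N1}. h n)"
      unfolding M0N1 h_def \<delta>_def by simp
    then show ?thesis unfolding split1 split2 .
  qed
  have c2: "HS < (1 + \<delta>) * S"
  proof -
    have "N0 \<le> M0 - 1" "1 \<le> M0 - 1" using big unfolding M0_def by auto
    from conv[OF this] have X: "(\<Sum>n\<in>{1..<M0}. h n) < (1 + \<delta>) * (\<Sum>n\<in>{1..<M0}. m n)"
      unfolding M0N1 h_def \<delta>_def by simp
    then show ?thesis unfolding S_def HS_def .
  qed
  define A :: real where "A = 2^p * 2^k"
  have A0: "0 < A" unfolding A_def by simp
  have BkA: "A \<le> Bk" unfolding A_def Bk_def M0_def N1_def by (rule blk_lower[OF rk])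
  have S0: "0 \<le> S" unfolding S_def using m_pos by (intro sum_nonneg) (auto intro: less_imp_le)
  have SA: "S \<le> 2 * 2^p * A"
  proof -
    have "S \<le> 2^(2*p+1) * (2^k - 1)" unfolding S_def M0_def by (rule prefix_upper)
    also have "\<dots> \<le> 2^(2*p+1) * 2^k" by simp
    also have "\<dots> = 2 * 2^p * A" unfolding A_def pow_e by simp
    finally show ?thesis .
  qed
  have d2: "(2::real) \<le> 2^(p+4)" using power_increasing[of 1 "p+4" "2::real"] by simp
  have \<delta>0: "0 \<le> \<delta>" "\<delta> \<le> 1/2" unfolding \<delta>_def using d2 by (auto intro!: divide_left_mono)
  have \<delta>p: "\<delta> * 2^p = 1/16" unfolding \<delta>_def by (simp add: power_add)
  have "2 * \<delta> * S \<le> 2 * \<delta> * (2 * 2^p * A)" using SA \<delta>0 by (intro mult_left_mono) auto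
  also have "\<dots> = 4 * (\<delta> * 2^p) * A" by (simp add: algebra_simps)
  also have "\<dots> = A / 4" unfolding \<delta>p by simp
  finally have t1: "2 * \<delta> * S \<le> A / 4" .
  have "(1 - \<delta>) * A \<le> (1 - \<delta>) * Bk" using BkA \<delta>0 by (intro mult_left_mono) auto
  moreover have "A / 2 \<le> (1 - \<delta>) * A"
  proof -
    have "A * \<delta> \<le> A * (1/2)" using \<delta>0 A0 by (intro mult_left_mono) auto
    then show ?thesis by (simp add: algebra_simps)
  qed
  ultimately have t2: "A / 2 \<le> (1 - \<delta>) * Bk" by linarith
  have "HB > (1 - \<delta>) * (S + Bk) - (1 + \<delta>) * S" using c1 c2 by linarith
  moreover have "(1 - \<delta>) * (S + Bk) - (1 + \<delta>) * S = (1 - \<delta>) * Bk - 2 * \<delta> * S" by (simp add: algebra_simps)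
  ultimately have "HB > 0" using t1 t2 A0 by linarith
  then obtain n where n: "n \<in> {M0..<N1}" "h n \<noteq> 0" unfolding HB_def
    by (metis (no_types, lifting) less_irrefl sum.neutral)
  then have hitn: "(T ^^ n) x \<in> B (r n)" unfolding h_def by (simp split: split_indicator_asm)
  have "\<kappa> n = k" using n(1) unfolding M0_def N1_def by (intro in_blk) simp
  then have "r n = \<sigma> k" using m_lower[OF rk] by simp
  with hitn have "(T ^^ n) x \<in> B (\<sigma> k)" by simp
  moreover have "1 \<le> n" "n \<le> N1 - 1" using n(1) le by auto
  ultimately show ?thesis unfolding N1_def by (intro hit_le[THEN iffD2]) blast
qed

end


context up2 begin

lemma upper_lim:
  assumes H2: "strongly_BC M T (\<lambda>n. B (r n))"
  shows "AE x in M. eventually (\<lambda>\<rho>. hit_ratio M T (B \<rho>) x < ereal (1 + 2 / real p)) (at_right 0)"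
proof -
  have "AE x in M. (\<lambda>N. (\<Sum>n\<in>{1..N}. indicator ((T ^^ n) -` B (r n)) x :: real) / (\<Sum>n\<in>{1..N}. m n)) \<longlonglongrightarrow> 1"
    using H2 unfolding strongly_BC_def m_eq .
  then show ?thesis
  proof (rule eventually_mono)
    fix x assume conv: "(\<lambda>N. (\<Sum>n\<in>{1..N}. indicator ((T ^^ n) -` B (r n)) x :: real) / (\<Sum>n\<in>{1..N}. m n)) \<longlonglongrightarrow> 1"
    define \<delta> :: real where "\<delta> = 1/2^(p+4)"
    have \<delta>0: "0 < \<delta>" unfolding \<delta>_def by simp
    obtain N0 where N0: "\<And>N. N \<ge> N0 \<Longrightarrow> dist ((\<Sum>n\<in>{1..N}. indicator ((T ^^ n) -` B (r n)) x :: real) / (\<Sum>n\<in>{1..N}. m n)) 1 < \<delta>"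
      using tendstoD[OF conv \<delta>0] unfolding eventually_sequentially by blast
    have bnds: "(1 - 1/2^(p+4)) * (\<Sum>n\<in>{1..N}. m n) < (\<Sum>n\<in>{1..N}. indicator ((T ^^ n) -` B (r n)) x :: real) \<and>
      (\<Sum>n\<in>{1..N}. indicator ((T ^^ n) -` B (r n)) x :: real) < (1 + 1/2^(p+4)) * (\<Sum>n\<in>{1..N}. m n)"
      if "N0 \<le> N" "1 \<le> N" for N
    proof -
      define SS where "SS = (\<Sum>n\<in>{1..N}. m n)"
      define HH where "HH = (\<Sum>n\<in>{1..N}. indicator ((T ^^ n) -` B (r n)) x :: real)"
      have "m 1 \<le> SS" unfolding SS_def using that(2) m_pos by (intro member_le_sum) (auto intro: less_imp_le)
      then have SS0: "0 < SS" using m_pos[of 1] by linarith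
      have d: "dist (HH / SS) 1 < \<delta>" using N0[OF that(1)] unfolding HH_def SS_def .
      then have q: "1 - \<delta> < HH / SS" "HH / SS < 1 + \<delta>" unfolding dist_real_def by auto
      have "(1 - \<delta>) * SS < HH" using q(1) SS0 by (simp add: less_divide_eq)
      moreover have "HH < (1 + \<delta>) * SS" using q(2) SS0 by (simp add: divide_less_eq)
      ultimately show ?thesis unfolding HH_def SS_def \<delta>_def by simp
    qed
    define K1 where "K1 = N0 + 2*p + 4"
    have ev: "eventually (\<lambda>\<rho>. f \<rho> < lev K1) (at_right (0::real))"
      unfolding f_def using order_tendstoD(2)[OF Blim lev_pos] .
    show "eventually (\<lambda>\<rho>. hit_ratio M T (B \<rho>) x < ereal (1 + 2 / real p)) (at_right 0)"
      using ev eventually_at_right_less[of "0::real"]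
    proof (eventually_elim)
      case (elim \<rho>)
      define c where "c = f \<rho>"
      have c0: "0 < c" unfolding c_def f_def using Bpos elim by simp
      obtain k where k: "k > K1" "1 / 2^(p*k) \<le> c" "c < 1 / 2^(p*(k-1))"
        using lvl_upper[of c p K1] c0 p1 elim unfolding c_def lev_def by auto
      have k1: "1 \<le> k" using k(1) by simp
      have rk: "rel k" unfolding rel_def using elim k lev_pred[OF k1] unfolding c_def lev_def by auto
      have "N0 + 2 \<le> k" using k(1) unfolding K1_def by simp
      also have "k < 2^k" by simp
      also have "(2::nat)^k \<le> 2^((p+1)*k)" by (rule power_increasing) auto
      finally have big: "N0 + 2 \<le> 2^((p+1)*k)" by simp
      have hb: "hit_time T (B (\<sigma> k)) x \<le> enat (2^((p+1)*(k+1)) - 1)"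
        by (rule hit_block[OF bnds rk big]) auto
      have "\<sigma> k \<le> \<rho>" using sigma_props(4)[OF rk] elim k(2) unfolding c_def lev_def by simp
      then have "hit_time T (B \<rho>) x \<le> hit_time T (B (\<sigma> k)) x" by (intro hit_mono Bmono)
      with hb have hr: "hit_time T (B \<rho>) x \<le> enat (2^((p+1)*(k+1)) - 1)" by (meson order_trans)
      then obtain mm where mm: "hit_time T (B \<rho>) x = enat mm" "mm \<le> 2^((p+1)*(k+1)) - 1"
        by (cases "hit_time T (B \<rho>) x") auto
      have mm1: "1 \<le> mm" using hit_ge1[OF mm(1)] .
      have "mm < 2^((p+1)*(k+1))" using mm(2) by (metis diff_less le_less_trans less_numeral_extra(1) zero_less_numeral zero_less_power)
      then have "real mm < 2^((p+1)*(k+1))" by (metis of_nat_less_numeral_power_cancel_iff)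
      then have "ln (real mm) < ln (2^((p+1)*(k+1)))" using mm1 by (intro ln_less_cancel_iff[THEN iffD2]) auto
      moreover have e: "ln ((2::real)^((p+1)*(k+1))) = real (p+1) * (real k + 1) * ln 2"
        by (simp only: ln_realpow) (simp add: algebra_simps)
      ultimately have l1: "ln (real mm) < real (p+1) * (real k + 1) * ln 2" by linarith
      have "ln c < ln (1 / 2^(p*(k-1)))" using k(3) c0 by (intro ln_less_cancel_iff[THEN iffD2]) auto
      then have l2: "real p * (real k - 1) * ln 2 < - ln c" using k1 by (simp add: ln_div ln_realpow of_nat_diff)
      have ln2: "0 < ln (2::real)" by simp
      have kr: "real k \<ge> 2 * real p + 4" using k(1) unfolding K1_def by simp
      have pr: "real p \<ge> 1" using p1 by simp
      have pos: "0 < - ln c"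
      proof -
        have "0 \<le> real p * (real k - 1) * ln 2" using kr pr ln2 by simp
        then show ?thesis using l2 by linarith
      qed
      have "real (p+1) * (real k + 1) * ln 2 \<le> (real p + 2) * (real k - 1) * ln 2"
        using kr ln2 by (intro mult_right_mono) (auto simp: algebra_simps)
      also have "\<dots> = (1 + 2 / real p) * (real p * (real k - 1) * ln 2)" using pr by (simp add: field_simps)
      also have "\<dots> < (1 + 2 / real p) * (- ln c)" using l2 pr by (intro mult_strict_left_mono) (auto intro: add_pos_nonneg)
      finally have X: "ln (real mm) < (1 + 2 / real p) * (- ln c)" using l1 by linarith
      have "ln (real mm) / (- ln c) < 1 + 2 / real p" unfolding pos_divide_less_eq[OF pos] using X by linarith
      moreover have "hit_ratio M T (B \<rho>) x = ereal (ln (real mm) / - ln c)"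
        using ratio_enat[of T "B \<rho>" x mm M] mm unfolding c_def f_def by simp
      ultimately show ?case by simp
    qed
  qed
qed

end


lemma lim0:
  fixes B :: "real \<Rightarrow> 'a set"
  assumes fm: "finite_measure M" and Bm: "\<And>r. B r \<in> sets M" and Bmono: "\<And>r s. r \<le> s \<Longrightarrow> B r \<subseteq> B s"
    and z: "measure M (\<Inter>n. B (1 / (real n + 1))) = 0"
  shows "((\<lambda>r. measure M (B r)) \<longlongrightarrow> 0) (at_right 0)"
proof -
  interpret finite_measure M by fact
  have dec: "decseq (\<lambda>n. B (1 / (real n + 1)))" unfolding decseq_def by (auto intro!: Bmono divide_left_mono)
  have lim: "(\<lambda>n. measure M (B (1 / (real n + 1)))) \<longlonglongrightarrow> 0"
    using finite_Lim_measure_decseq[of "\<lambda>n. B (1 / (real n + 1))"] dec Bm z by auto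
  show ?thesis
  proof (rule order_tendstoI)
    fix a :: real assume "a < 0"
    then show "eventually (\<lambda>r. a < measure M (B r)) (at_right 0)"
      by (intro always_eventually) (auto intro: less_le_trans)
  next
    fix b :: real assume b: "0 < b"
    obtain n where n: "measure M (B (1 / (real n + 1))) < b"
      using order_tendstoD(2)[OF lim b] unfolding eventually_sequentially by auto
    show "eventually (\<lambda>r. measure M (B r) < b) (at_right 0)"
      unfolding eventually_at_right_field
    proof (intro exI[of _ "1 / (real n + 1)"] conjI allI impI)
      show "0 < 1 / (real n + 1)" by simp
      fix y :: real assume "0 < y" "y < 1 / (real n + 1)"
      then have "measure M (B y) \<le> measure M (B (1 / (real n + 1)))"
        using Bm Bmono by (intro finite_measure_mono) auto
      with n show "measure M (B y) < b" by simp
    qed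
  qed
qed

lemma Liminf_le_freq:
  fixes f :: "_ \<Rightarrow> ereal"
  assumes "\<exists>\<^sub>F x in F. f x \<le> c"
  shows "Liminf F f \<le> c"
  unfolding Liminf_def
proof (rule SUP_least)
  fix P assume "P \<in> {P. eventually P F}"
  then have "\<exists>\<^sub>F x in F. P x \<and> f x \<le> c" using frequently_eventually_conj[OF assms] by auto
  then obtain x where "P x" "f x \<le> c" using frequently_ex by blast
  then show "(INF x\<in>Collect P. f x) \<le> c" by (intro INF_lower2) auto
qed

lemma ex_p_low: "z < (1::ereal) \<Longrightarrow> \<exists>p::nat. 2 \<le> p \<and> z \<le> ereal (1 - 2 / real p)"
proof (cases z)
  case (real t)
  assume "z < 1"
  then have t: "t < 1" using real by simp
  define p where "p = nat \<lceil>2 / (1 - t)\<rceil> + 2"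
  have pp: "2 / (1 - t) \<le> real p" unfolding p_def by linarith
  have p0: "0 < real p" unfolding p_def by simp
  have "2 \<le> real p * (1 - t)" using t pp by (simp add: divide_le_eq mult.commute)
  then have "2 / real p \<le> 1 - t" using p0 by (simp add: divide_le_eq mult.commute)
  then show ?thesis using real by (intro exI[of _ p]) (auto simp: p_def)
next
  case PInf
  assume "z < 1" then show ?thesis using PInf by simp
next
  case MInf then show ?thesis by (intro exI[of _ 2]) auto
qed

lemma ex_p_high: "(1::ereal) < z \<Longrightarrow> \<exists>p::nat. 1 \<le> p \<and> ereal (1 + 2 / real p) < z"
proof (cases z)
  case (real t)
  assume "1 < z"
  then have t: "1 < t" using real by simp
  define p where "p = nat \<lceil>2 / (t - 1)\<rceil> + 1"
  have pp: "2 / (t - 1) < real p" unfolding p_def by linarith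
  have p0: "0 < real p" unfolding p_def by simp
  have "2 < real p * (t - 1)" using pp t by (simp add: divide_less_eq mult.commute)
  then have "2 / real p < t - 1" using p0 by (simp add: divide_less_eq mult.commute)
  then show ?thesis using real by (intro exI[of _ p]) (auto simp: p_def)
next
  case PInf then show ?thesis by (intro exI[of _ 1]) auto
next
  case MInf
  assume "1 < z" then show ?thesis using MInf by simp
qed

lemma le_one_ereal: "(\<And>p::nat. 1 \<le> p \<Longrightarrow> L \<le> ereal (1 + 1 / real p)) \<Longrightarrow> L \<le> (1::ereal)"
proof (rule ccontr)
  assume a: "\<And>p::nat. 1 \<le> p \<Longrightarrow> L \<le> ereal (1 + 1 / real p)" and "\<not> L \<le> 1"
  then have "1 < L" by simp
  then obtain p :: nat where p: "1 \<le> p" "ereal (1 + 2 / real p) < L" using ex_p_high by blast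
  have "1 + 1 / real p \<le> 1 + 2 / real p" using p(1) by (simp add: divide_right_mono)
  then have "ereal (1 + 1 / real p) \<le> ereal (1 + 2 / real p)" by simp
  with a[OF p(1)] have "L \<le> ereal (1 + 2 / real p)" by (rule order_trans)
  with p(2) show False by simp
qed

theorem theorem2p4:
  fixes M :: "'a::metric_space measure" and T :: "'a \<Rightarrow> 'a"
  assumes prob: "prob_space M"
    and borel: "sets M = sets borel"
    and no_atoms: "\<And>x. measure M {x} = 0"
    and meas: "T \<in> M \<rightarrow>\<^sub>M M"
    and preserving: "distr M M T = M"
  shows
    "((\<forall>y (r :: nat \<Rightarrow> real).
         (\<forall>n. ball y (r (Suc n)) \<subseteq> ball y (r n)) \<and>
         (\<Sum>n. emeasure M (ball y (r n))) = \<infinity> \<longrightarrow>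
         measure M {x. \<exists>\<^sub>\<infinity> n. x \<in> (T ^^ n) -` ball y (r n)} = 1)
      \<longrightarrow> (\<forall>y. (\<forall>\<epsilon>>0. measure M (ball y \<epsilon>) > 0) \<longrightarrow>
             (AE x in M. Liminf (at_right 0) (\<lambda>\<rho>. hit_ratio M T (ball y \<rho>) x) = 1)))
     \<and>
     ((\<forall>y (r :: nat \<Rightarrow> real).
         (\<forall>n. cball y (r (Suc n)) \<subseteq> cball y (r n)) \<and>
         (\<Sum>n. emeasure M (cball y (r n))) = \<infinity> \<longrightarrow>
         strongly_BC M T (\<lambda>n. cball y (r n)))
      \<longrightarrow> (\<forall>y. (\<forall>\<epsilon>>0. measure M (cball y \<epsilon>) > 0) \<longrightarrow>
             (AE x in M. ((\<lambda>\<rho>. hit_ratio M T (cball y \<rho>) x) \<longlongrightarrow> 1) (at_right 0))))"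
proof -
  have spU: "space M = UNIV" using sets_eq_imp_space_eq[OF borel] by simp
  interpret mpres M T
    by (rule mpres.intro[OF prob]) (use spU meas preserving in \<open>simp add: mpres_axioms_def\<close>)
  have ballm: "ball y r \<in> sets M" for y :: 'a and r using borel by simp
  have cballm: "cball y r \<in> sets M" for y :: 'a and r using borel by simp
  have ballmono: "r \<le> s \<Longrightarrow> ball y r \<subseteq> ball y s" for y :: 'a and r s by auto
  have cballmono: "r \<le> s \<Longrightarrow> cball y r \<subseteq> cball y s" for y :: 'a and r s by auto
  have cint: "(\<Inter>n. cball y (1 / (real n + 1))) = {y}" for y :: 'a
  proof
    show "{y} \<subseteq> (\<Inter>n. cball y (1 / (real n + 1)))" by auto
    show "(\<Inter>n. cball y (1 / (real n + 1))) \<subseteq> {y}"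
    proof
      fix x assume x: "x \<in> (\<Inter>n. cball y (1 / (real n + 1)))"
      have "dist y x = 0"
      proof (rule ccontr)
        assume "dist y x \<noteq> 0"
        then have "0 < dist y x" by simp
        then obtain n where "inverse (real (Suc n)) < dist y x" using reals_Archimedean by blast
        then have "1 / (real n + 1) < dist y x" by (simp add: inverse_eq_divide add.commute)
        with x show False by (auto simp: not_le[symmetric])
      qed
      then show "x \<in> {y}" by simp
    qed
  qed
  have cball_lim: "((\<lambda>r. measure M (cball y r)) \<longlongrightarrow> 0) (at_right 0)" for y :: 'a
    by (rule lim0[OF _ cballm cballmono]) (auto simp: cint no_atoms intro: finite_measure_axioms)
  have ball_lim: "((\<lambda>r. measure M (ball y r)) \<longlongrightarrow> 0) (at_right 0)" for y :: 'a
  proof (rule lim0[OF _ ballm ballmono])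
    show "finite_measure M" by (rule finite_measure_axioms)
    have "(\<Inter>n. ball y (1 / (real n + 1))) \<subseteq> (\<Inter>n. cball y (1 / (real n + 1)))" by auto
    then have "(\<Inter>n. ball y (1 / (real n + 1))) \<subseteq> {y}" unfolding cint[of y] .
    then have "measure M (\<Inter>n. ball y (1 / (real n + 1))) \<le> measure M {y}"
      using borel by (intro finite_measure_mono) auto
    then show "measure M (\<Inter>n. ball y (1 / (real n + 1))) = 0" using no_atoms[of y]
      by (simp add: antisym measure_nonneg)
  qed
  have ccont: "(\<Inter>n. cball y (s + 1 / (real n + 1))) = cball y s" for y :: 'a and s
  proof
    show "cball y s \<subseteq> (\<Inter>n. cball y (s + 1 / (real n + 1)))" by (auto intro!: add_increasing2)
    show "(\<Inter>n. cball y (s + 1 / (real n + 1))) \<subseteq> cball y s"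
    proof
      fix x assume x: "x \<in> (\<Inter>n. cball y (s + 1 / (real n + 1)))"
      show "x \<in> cball y s"
      proof (rule ccontr)
        assume "x \<notin> cball y s"
        then have "0 < dist y x - s" by simp
        then obtain n where "inverse (real (Suc n)) < dist y x - s" using reals_Archimedean by blast
        then have "s + 1 / (real n + 1) < dist y x" by (simp add: inverse_eq_divide add.commute)
        with x show False by (auto simp: not_le[symmetric])
      qed
    qed
  qed
  show ?thesis
  proof (intro conjI impI allI)
    fix y :: 'a
    assume H: "\<forall>y (r :: nat \<Rightarrow> real).
         (\<forall>n. ball y (r (Suc n)) \<subseteq> ball y (r n)) \<and>
         (\<Sum>n. emeasure M (ball y (r n))) = \<infinity> \<longrightarrow>
         measure M {x. \<exists>\<^sub>\<infinity> n. x \<in> (T ^^ n) -` ball y (r n)} = 1"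
      and sup: "\<forall>\<epsilon>>0. measure M (ball y \<epsilon>) > 0"
    have lb: "AE x in M. \<forall>p::nat. 2 \<le> p \<longrightarrow> eventually (\<lambda>r. ereal (1 - 2 / real p) < hit_ratio M T (ball y r) x) (at_right 0)"
      by (rule lower_bound[OF ballm ballmono _ ball_lim]) (use sup in auto)
    have ub: "AE x in M. \<forall>p::nat. 1 \<le> p \<longrightarrow> (\<exists>\<^sub>F \<rho> in at_right 0. hit_ratio M T (ball y \<rho>) x \<le> ereal (1 + 1 / real p))"
      unfolding AE_all_countable
    proof (intro allI)
      fix p :: nat
      show "AE x in M. 1 \<le> p \<longrightarrow> (\<exists>\<^sub>F \<rho> in at_right 0. hit_ratio M T (ball y \<rho>) x \<le> ereal (1 + 1 / real p))"
      proof (cases "1 \<le> p")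
        case True
        have "AE x in M. (\<exists>\<^sub>F \<rho> in at_right 0. hit_ratio M T (ball y \<rho>) x \<le> ereal (1 + 1 / real p))"
          by (rule upper_liminf[OF ballm ballmono _ ball_lim _ True]) (use sup H in auto)
        then show ?thesis by (rule eventually_mono) simp
      qed simp
    qed
    show "AE x in M. Liminf (at_right 0) (\<lambda>\<rho>. hit_ratio M T (ball y \<rho>) x) = 1"
      using lb ub
    proof (eventually_elim)
      case (elim x)
      show ?case
      proof (rule antisym)
        show "Liminf (at_right 0) (\<lambda>\<rho>. hit_ratio M T (ball y \<rho>) x) \<le> 1"
          by (rule le_one_ereal) (use elim(2) in \<open>auto intro: Liminf_le_freq\<close>)
        show "1 \<le> Liminf (at_right 0) (\<lambda>\<rho>. hit_ratio M T (ball y \<rho>) x)"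
          unfolding le_Liminf_iff
        proof (intro allI impI)
          fix z :: ereal assume "z < 1"
          then obtain p :: nat where p: "2 \<le> p" "z \<le> ereal (1 - 2 / real p)" using ex_p_low by blast
          have "eventually (\<lambda>r. ereal (1 - 2 / real p) < hit_ratio M T (ball y r) x) (at_right 0)"
            using elim(1)[rule_format, OF p(1)] .
          then show "eventually (\<lambda>r. z < hit_ratio M T (ball y r) x) (at_right 0)"
            by (rule eventually_mono) (use p(2) in \<open>auto intro: le_less_trans\<close>)
        qed
      qed
    qed
  next
    fix y :: 'a
    assume H: "\<forall>y (r :: nat \<Rightarrow> real).
         (\<forall>n. cball y (r (Suc n)) \<subseteq> cball y (r n)) \<and>
         (\<Sum>n. emeasure M (cball y (r n))) = \<infinity> \<longrightarrow>
         strongly_BC M T (\<lambda>n. cball y (r n))"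
      and sup: "\<forall>\<epsilon>>0. measure M (cball y \<epsilon>) > 0"
    have lb: "AE x in M. \<forall>p::nat. 2 \<le> p \<longrightarrow> eventually (\<lambda>r. ereal (1 - 2 / real p) < hit_ratio M T (cball y r) x) (at_right 0)"
      by (rule lower_bound[OF cballm cballmono _ cball_lim]) (use sup in auto)
    have ub: "AE x in M. \<forall>p::nat. 1 \<le> p \<longrightarrow> eventually (\<lambda>\<rho>. hit_ratio M T (cball y \<rho>) x < ereal (1 + 2 / real p)) (at_right 0)"
      unfolding AE_all_countable
    proof (intro allI)
      fix p :: nat
      show "AE x in M. 1 \<le> p \<longrightarrow> eventually (\<lambda>\<rho>. hit_ratio M T (cball y \<rho>) x < ereal (1 + 2 / real p)) (at_right 0)"
      proof (cases "1 \<le> p")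
        case True
        interpret U: up2 M T "cball y" p
          by unfold_locales (use cballm cballmono sup cball_lim ccont True in auto)
        have "strongly_BC M T (\<lambda>n. cball y (U.r n))"
          using H[rule_format, OF conjI[OF U.r_dec U.sum_inf]] .
        then have "AE x in M. eventually (\<lambda>\<rho>. hit_ratio M T (cball y \<rho>) x < ereal (1 + 2 / real p)) (at_right 0)"
          by (rule U.upper_lim)
        then show ?thesis by (rule eventually_mono) simp
      qed simp
    qed
    show "AE x in M. ((\<lambda>\<rho>. hit_ratio M T (cball y \<rho>) x) \<longlongrightarrow> 1) (at_right 0)"
      using lb ub
    proof (eventually_elim)
      case (elim x)
      show ?case
      proof (rule order_tendstoI)
        fix z :: ereal assume "z < 1"
        then obtain p :: nat where p: "2 \<le> p" "z \<le> ereal (1 - 2 / real p)" using ex_p_low by blast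
        have "eventually (\<lambda>r. ereal (1 - 2 / real p) < hit_ratio M T (cball y r) x) (at_right 0)"
          using elim(1)[rule_format, OF p(1)] .
        then show "eventually (\<lambda>r. z < hit_ratio M T (cball y r) x) (at_right 0)"
          by (rule eventually_mono) (use p(2) in \<open>auto intro: le_less_trans\<close>)
      next
        fix z :: ereal assume "1 < z"
        then obtain p :: nat where p: "1 \<le> p" "ereal (1 + 2 / real p) < z" using ex_p_high by blast
        have "eventually (\<lambda>r. hit_ratio M T (cball y r) x < ereal (1 + 2 / real p)) (at_right 0)"
          using elim(2)[rule_format, OF p(1)] .
        then show "eventually (\<lambda>r. hit_ratio M T (cball y r) x < z) (at_right 0)"
          by (rule eventually_mono) (use p(2) in \<open>auto intro: less_trans\<close>)
      qed
    qed
  qed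
qed


end
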